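(* Let $\mathbf p$ be a non-degenerate configuration of $n$ points in $\mathbb R^d$ (not necessarily pinned) with affine span of dimension $\ell$, and let $\mathbf p(t)$ be an analytic trajectory with $\mathbf p(0)=\mathbf p$. Then there exist $\varepsilon>0$ and an analytic trajectory of isometries $T(t)$, $t\in[0,\varepsilon)$, such that $\mathbf q(t):=T(t)\mathbf p(t)$ is in $\ell$-pinned position for all $t\in[0,\varepsilon)$.
   Context: A configuration $\mathbf q=(\mathbf q_1,\dots,\mathbf q_n)$, $\mathbf q_i\in\mathbb R^d$, is in $\ell$-pinned position if $\mathbf q_1=0$ and, for $2\le i\le\ell+1$, $\mathbf q_i$ lies in the span of $e_1,\dots,e_{i-1}$. A configuration $\mathbf p$ with $\ell$-dimensional affine span is non-degenerate if $\mathbf p_1,\dots,\mathbf p_{\ell+1}$ are affinely independent. An analytic trajectory of isometries is a family $T(t)\mathbf x=A(t)\mathbf x+\mathbf b(t)$ of isometries of $\mathbb R^d$ with $A(t)$ orthogonal and $A(t),\mathbf b(t)$ analytic in $t$; it acts on configurations pointwise. *)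

theory Defs
  imports "HOL-Analysis.Analysis"
begin

text \<open>Vector-valued (e.g. real^'d or
  matrices real^'d^'d) functions are allowed; this is equivalent to
  componentwise analyticity.\<close>
definition real_analytic_on :: "real set \<Rightarrow> (real \<Rightarrow> 'a::real_normed_vector) \<Rightarrow> bool" where
  "real_analytic_on S f \<longleftrightarrow>
     (\<forall>x\<in>S. \<exists>r>0. \<exists>c::nat \<Rightarrow> 'a.
        \<forall>y\<in>S. \<bar>y - x\<bar> < r \<longrightarrow> (\<lambda>k. ((y - x) ^ k) *\<^sub>R c k) sums f y)"

text \<open>The first k standard coordinates e_1,...,e_k of real^'d, w.r.t. the
  linear order on the (finite) index type 'd.\<close>
definition first_coords :: "nat \<Rightarrow> ('d::{finite,linorder}) set" where
  "first_coords k = {j. card {j'. j' < j} < k}"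

definition pinned :: "nat \<Rightarrow> (nat \<Rightarrow> (real, 'd::{finite,linorder}) vec) \<Rightarrow> bool" where
  "pinned l q \<longleftrightarrow> q 1 = 0 \<and>
     (\<forall>i. 2 \<le> i \<and> i \<le> l + 1 \<longrightarrow> q i \<in> span ((\<lambda>j. axis j 1) ` first_coords (i - 1)))"

definition nondegenerate :: "nat \<Rightarrow> nat \<Rightarrow> (nat \<Rightarrow> real^('d::finite)) \<Rightarrow> bool" where
  "nondegenerate n l p \<longleftrightarrow> aff_dim (p ` {1..n}) = int l \<and>
     inj_on p {1..l+1} \<and> \<not> affine_dependent (p ` {1..l+1})"

end

theory Submission
  imports Defs "HOL-Complex_Analysis.Complex_Analysis"
begin

definition cext :: "real set \<Rightarrow> (real \<Rightarrow> real) \<Rightarrow> bool" where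
  "cext S f \<longleftrightarrow> (\<forall>x\<in>S. \<exists>r>0. \<exists>g. g holomorphic_on ball (complex_of_real x) r \<and>
      (\<forall>y\<in>S. \<bar>y - x\<bar> < r \<longrightarrow> g (of_real y) = of_real (f y)))"

lemma dist_of_real_c: "dist (complex_of_real y) (complex_of_real x) = \<bar>y - x\<bar>"
  by (simp add: dist_norm flip: of_real_diff)

lemma cext_imp_analytic:
  assumes "cext S f" shows "real_analytic_on S f"
  unfolding real_analytic_on_def
proof
  fix x assume "x \<in> S"
  then obtain r g where r: "r > 0" and g: "g holomorphic_on ball (complex_of_real x) r"
    and agree: "\<forall>y\<in>S. \<bar>y - x\<bar> < r \<longrightarrow> g (of_real y) = of_real (f y)"
    using assms unfolding cext_def by blast
  define c where "c k = Re ((deriv ^^ k) g (of_real x) / fact k)" for k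
  have "\<forall>y\<in>S. \<bar>y - x\<bar> < r \<longrightarrow> (\<lambda>k. ((y - x) ^ k) *\<^sub>R c k) sums f y"
  proof (intro ballI impI)
    fix y assume y: "y \<in> S" "\<bar>y - x\<bar> < r"
    have "complex_of_real y \<in> ball (of_real x) r"
      using y by (simp add: dist_commute dist_of_real_c dist_real_def)
    from holomorphic_power_series[OF g this]
    have "(\<lambda>n. (deriv ^^ n) g (of_real x) / fact n * (of_real y - of_real x) ^ n) sums g (of_real y)" .
    from sums_Re[OF this] have "(\<lambda>n. Re ((deriv ^^ n) g (of_real x) / fact n * (of_real y - of_real x) ^ n)) sums f y"
      using agree y by simp
    moreover have "Re ((deriv ^^ n) g (of_real x) / fact n * (of_real y - of_real x) ^ n) = ((y - x) ^ n) *\<^sub>R c n" for n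
    proof -
      have "(complex_of_real y - of_real x) ^ n = of_real ((y - x) ^ n)" by simp
      then have "(deriv ^^ n) g (of_real x) / fact n * (of_real y - of_real x) ^ n
          = complex_of_real ((y - x) ^ n) * ((deriv ^^ n) g (of_real x) / fact n)"
        by (simp only: mult.commute)
      have Re_ofr: "Re (complex_of_real a * z) = a * Re z" for a z by simp
      show ?thesis unfolding c_def \<open>_ = complex_of_real ((y - x) ^ n) * _\<close> real_scaleR_def
        by (rule Re_ofr)
    qed
    ultimately show "(\<lambda>k. ((y - x) ^ k) *\<^sub>R c k) sums f y" by simp
  qed
  then show "\<exists>r>0. \<exists>c::nat \<Rightarrow> real. \<forall>y\<in>S. \<bar>y - x\<bar> < r \<longrightarrow> (\<lambda>k. ((y - x) ^ k) *\<^sub>R c k) sums f y"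
    using r by blast
qed

lemma analytic_imp_cext:
  assumes "real_analytic_on {0..<e} f" shows "cext {0..<e} f"
  unfolding cext_def
proof
  fix x assume x: "x \<in> {0..<e}"
  then obtain r and c :: "nat \<Rightarrow> real" where r: "r > 0"
    and cs: "\<forall>y\<in>{0..<e}. \<bar>y - x\<bar> < r \<longrightarrow> (\<lambda>k. ((y - x) ^ k) *\<^sub>R c k) sums f y"
    using assms unfolding real_analytic_on_def by blast
  define s where "s = min r (e - x) / 2"
  have "min r (e - x) \<le> e - x" "min r (e - x) \<le> r" "min r (e - x) > 0" using x r by auto
  then have s: "s > 0" "s < r" "x + s \<in> {0..<e}" using x r unfolding s_def by (auto simp: min_def)
  have "(\<lambda>k. s ^ k * c k) sums f (x + s)" using cs[rule_format, of "x+s"] s by simp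
  then have "(\<lambda>k. complex_of_real (s ^ k * c k)) sums of_real (f (x + s))"
    by (rule sums_of_real)
  then have sm: "summable (\<lambda>k. complex_of_real (c k) * (complex_of_real s) ^ k)"
    by (simp add: sums_summable mult.commute)
  define g where "g w = (\<Sum>k. complex_of_real (c k) * (w - of_real x) ^ k)" for w
  have gs: "(\<lambda>k. complex_of_real (c k) * (w - of_real x) ^ k) sums g w"
    if "w \<in> ball (of_real x) s" for w
  proof -
    have "norm (w - of_real x) < norm (complex_of_real s)"
      using that s by (simp add: dist_norm norm_minus_commute)
    from powser_insidea[OF sm this] have "summable (\<lambda>k. complex_of_real (c k) * (w - of_real x) ^ k)"
      by (rule summable_norm_cancel)
    then show ?thesis unfolding g_def by (rule summable_sums)
  qed
  have hol: "g holomorphic_on ball (of_real x) s"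
    by (rule power_series_holomorphic) (rule gs)
  have "\<forall>y\<in>{0..<e}. \<bar>y - x\<bar> < s \<longrightarrow> g (of_real y) = of_real (f y)"
  proof (intro ballI impI)
    fix y assume y: "y \<in> {0..<e}" "\<bar>y - x\<bar> < s"
    then have "(\<lambda>k. ((y - x) ^ k) *\<^sub>R c k) sums f y" using cs s by auto
    then have "(\<lambda>k. (y - x) ^ k * c k) sums f y" by simp
    then have "(\<lambda>k. complex_of_real ((y - x) ^ k * c k)) sums of_real (f y)"
      by (rule sums_of_real)
    moreover have "complex_of_real y \<in> ball (of_real x) s"
      using y by (simp add: dist_commute dist_of_real_c dist_real_def)
    from gs[OF this] have "(\<lambda>k. complex_of_real ((y - x) ^ k * c k)) sums g (of_real y)"
      by (simp add: mult.commute)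
    ultimately show "g (of_real y) = of_real (f y)" using sums_unique2 by blast
  qed
  then show "\<exists>r>0. \<exists>g. g holomorphic_on ball (complex_of_real x) r \<and>
      (\<forall>y\<in>{0..<e}. \<bar>y - x\<bar> < r \<longrightarrow> g (of_real y) = of_real (f y))"
    using hol s by blast
qed

lemma cext_mono: "T \<subseteq> S \<Longrightarrow> cext S f \<Longrightarrow> cext T f"
  unfolding cext_def by blast

lemma cext_const: "cext S (\<lambda>t. c)"
  unfolding cext_def
  by (intro ballI exI[of _ 1] conjI exI[of _ "\<lambda>_. complex_of_real c"]) auto

lemma cext2:
  assumes f: "cext S f" and g: "cext S g"
    and hol: "\<And>G H U. G holomorphic_on U \<Longrightarrow> H holomorphic_on U \<Longrightarrow> (\<lambda>z. F' (G z) (H z)) holomorphic_on U"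
    and re: "\<And>a b. F' (complex_of_real a) (complex_of_real b) = complex_of_real (F a b)"
  shows "cext S (\<lambda>t. F (f t) (g t))"
  unfolding cext_def
proof
  fix x assume x: "x \<in> S"
  obtain r1 g1 where r1: "r1 > 0" "g1 holomorphic_on ball (complex_of_real x) r1"
    "\<forall>y\<in>S. \<bar>y - x\<bar> < r1 \<longrightarrow> g1 (of_real y) = of_real (f y)"
    using f x unfolding cext_def by blast
  obtain r2 g2 where r2: "r2 > 0" "g2 holomorphic_on ball (complex_of_real x) r2"
    "\<forall>y\<in>S. \<bar>y - x\<bar> < r2 \<longrightarrow> g2 (of_real y) = of_real (g y)"
    using g x unfolding cext_def by blast
  let ?r = "min r1 r2"
  have "g1 holomorphic_on ball (complex_of_real x) ?r" "g2 holomorphic_on ball (complex_of_real x) ?r"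
    using r1 r2 by (auto intro: holomorphic_on_subset)
  then have "(\<lambda>z. F' (g1 z) (g2 z)) holomorphic_on ball (complex_of_real x) ?r" by (rule hol)
  moreover have "\<forall>y\<in>S. \<bar>y - x\<bar> < ?r \<longrightarrow> F' (g1 (of_real y)) (g2 (of_real y)) = of_real (F (f y) (g y))"
    using r1 r2 re by auto
  ultimately show "\<exists>r>0. \<exists>G. G holomorphic_on ball (complex_of_real x) r \<and>
      (\<forall>y\<in>S. \<bar>y - x\<bar> < r \<longrightarrow> G (of_real y) = of_real (F (f y) (g y)))"
    using r1 r2 by (intro exI[of _ ?r] conjI exI[of _ "\<lambda>z. F' (g1 z) (g2 z)"]) auto
qed

lemma cext_add: "cext S f \<Longrightarrow> cext S g \<Longrightarrow> cext S (\<lambda>t. f t + g t)"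
proof -
  assume a: "cext S f" "cext S g"
  have "cext S (\<lambda>t. (\<lambda>a b. a + b) (f t) (g t))"
    by (rule cext2[OF a, where F'="\<lambda>a b. a + b"]) (auto intro: holomorphic_on_add)
  then show ?thesis by simp
qed

lemma cext_diff: "cext S f \<Longrightarrow> cext S g \<Longrightarrow> cext S (\<lambda>t. f t - g t)"
proof -
  assume a: "cext S f" "cext S g"
  have "cext S (\<lambda>t. (\<lambda>a b. a - b) (f t) (g t))"
    by (rule cext2[OF a, where F'="\<lambda>a b. a - b"]) (auto intro: holomorphic_on_diff)
  then show ?thesis by simp
qed

lemma cext_mult: "cext S f \<Longrightarrow> cext S g \<Longrightarrow> cext S (\<lambda>t. f t * g t)"
proof -
  assume a: "cext S f" "cext S g"
  have "cext S (\<lambda>t. (\<lambda>a b. a * b) (f t) (g t))"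
    by (rule cext2[OF a, where F'="\<lambda>a b. a * b"]) (auto intro: holomorphic_on_mult)
  then show ?thesis by simp
qed

lemma cext_uminus: "cext S f \<Longrightarrow> cext S (\<lambda>t. - f t)"
  using cext_diff[OF cext_const[of S 0], of f] by simp

lemma cext_sum:
  assumes "finite I" "\<And>i. i \<in> I \<Longrightarrow> cext S (f i)"
  shows "cext S (\<lambda>t. \<Sum>i\<in>I. f i t)"
  using assms
proof (induction I rule: finite_induct)
  case empty then show ?case using cext_const[of S 0] by simp
next
  case (insert a I)
  then show ?case by (simp add: cext_add)
qed

lemma hol_pos_nbhd:
  assumes g: "g holomorphic_on ball x0 r" and r: "r > 0" and pos: "Re (g x0) > 0"
  shows "\<exists>\<delta>>0. \<delta> \<le> r \<and> (\<forall>z\<in>ball x0 \<delta>. Re (g z) > 0)"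
proof -
  have "x0 \<in> interior (ball x0 r)" using r by simp
  then have "continuous (at x0) g"
    using holomorphic_on_imp_continuous_on[OF g] continuous_on_interior by blast
  then have "\<forall>e>0. \<exists>d>0. g ` (ball x0 d) \<subseteq> ball (g x0) e"
    unfolding continuous_at_ball .
  then obtain d where d: "d > 0" "g ` ball x0 d \<subseteq> ball (g x0) (Re (g x0))"
    using pos by blast
  have "Re (g z) > 0" if "z \<in> ball x0 (min d r)" for z
  proof -
    have "z \<in> ball x0 d" using that by auto
    then have "g z \<in> ball (g x0) (Re (g x0))" by (rule subsetD[OF d(2) imageI])
    then have "dist (g x0) (g z) < Re (g x0)" by (simp only: mem_ball)
    moreover have "\<bar>Re (g x0 - g z)\<bar> \<le> dist (g x0) (g z)"
      unfolding dist_norm by (rule abs_Re_le_cmod)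
    ultimately show ?thesis by simp
  qed
  moreover have "min d r > 0" "min d r \<le> r" using d r by auto
  ultimately show ?thesis by (intro exI[of _ "min d r"] conjI) simp_all
qed

lemma cext_pos_nbhd:
  assumes "cext S h" "x \<in> S" "h x > 0"
  shows "\<exists>\<delta>>0. \<forall>y\<in>S. \<bar>y - x\<bar> < \<delta> \<longrightarrow> h y > 0"
proof -
  obtain r g where r: "r > 0" "g holomorphic_on ball (complex_of_real x) r"
    "\<forall>y\<in>S. \<bar>y - x\<bar> < r \<longrightarrow> g (of_real y) = of_real (h y)"
    using assms unfolding cext_def by blast
  have "Re (g (of_real x)) > 0" using r assms by simp
  from hol_pos_nbhd[OF r(2) r(1) this] obtain \<delta> where d: "\<delta> > 0" "\<delta> \<le> r"
    "\<forall>z\<in>ball (complex_of_real x) \<delta>. Re (g z) > 0" by blast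
  have "h y > 0" if "y \<in> S" "\<bar>y - x\<bar> < \<delta>" for y
  proof -
    have "complex_of_real y \<in> ball (complex_of_real x) \<delta>"
      using that by (simp add: dist_commute dist_of_real_c dist_real_def)
    then have "Re (g (of_real y)) > 0" using d by blast
    then show ?thesis using r d that by simp
  qed
  then show ?thesis using d by blast
qed

lemma cext_inv_sqrt:
  assumes h: "cext S h" and pos: "\<And>y. y \<in> S \<Longrightarrow> h y > 0"
  shows "cext S (\<lambda>t. 1 / sqrt (h t))"
  unfolding cext_def
proof
  fix x assume x: "x \<in> S"
  obtain r g where r: "r > 0" "g holomorphic_on ball (complex_of_real x) r"
    "\<forall>y\<in>S. \<bar>y - x\<bar> < r \<longrightarrow> g (of_real y) = of_real (h y)"
    using h x unfolding cext_def by blast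
  have "Re (g (of_real x)) > 0" using r x pos by simp
  from hol_pos_nbhd[OF r(2) r(1) this] obtain \<delta> where d: "\<delta> > 0" "\<delta> \<le> r"
    "\<forall>z\<in>ball (complex_of_real x) \<delta>. Re (g z) > 0" by blast
  have gh: "g holomorphic_on ball (complex_of_real x) \<delta>"
    using r(2) d by (auto intro: holomorphic_on_subset)
  have "(\<lambda>z. inverse (csqrt (g z))) holomorphic_on ball (complex_of_real x) \<delta>"
  proof (rule holomorphic_on_inverse)
    show "(\<lambda>z. csqrt (g z)) holomorphic_on ball (complex_of_real x) \<delta>"
    proof (rule holomorphic_on_csqrt'[OF gh])
      fix z assume "z \<in> ball (complex_of_real x) \<delta>"
      then have "Re (g z) > 0" using d(3) by blast
      then show "g z \<notin> \<real>\<^sub>\<le>\<^sub>0" by (simp add: complex_nonpos_Reals_iff)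
    qed
    fix z assume "z \<in> ball (complex_of_real x) \<delta>"
    then have "Re (g z) > 0" using d(3) by blast
    then have "g z \<noteq> 0" by auto
    then show "csqrt (g z) \<noteq> 0" by simp
  qed
  moreover have "\<forall>y\<in>S. \<bar>y - x\<bar> < \<delta> \<longrightarrow> inverse (csqrt (g (of_real y))) = of_real (1 / sqrt (h y))"
  proof (intro ballI impI)
    fix y assume y: "y \<in> S" "\<bar>y - x\<bar> < \<delta>"
    then have "g (of_real y) = of_real (h y)" using r d by auto
    moreover have "h y > 0" using pos y by auto
    ultimately show "inverse (csqrt (g (of_real y))) = of_real (1 / sqrt (h y))"
    proof -
      have "csqrt (of_real (h y)) = of_real (sqrt (h y))" using \<open>h y > 0\<close> by simp
      then show ?thesis using \<open>g (of_real y) = of_real (h y)\<close> by (simp add: inverse_eq_divide)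
    qed
  qed
  ultimately show "\<exists>r>0. \<exists>G. G holomorphic_on ball (complex_of_real x) r \<and>
      (\<forall>y\<in>S. \<bar>y - x\<bar> < r \<longrightarrow> G (of_real y) = of_real (1 / sqrt (h y)))"
    using d(1) by (intro exI[of _ \<delta>] conjI exI[of _ "\<lambda>z. inverse (csqrt (g z))"])
qed

definition vext :: "real set \<Rightarrow> (real \<Rightarrow> real^'n) \<Rightarrow> bool" where
  "vext S f \<longleftrightarrow> (\<forall>j. cext S (\<lambda>t. f t $ j))"

lemma analytic_vec:
  fixes f :: "real \<Rightarrow> 'a::real_normed_vector ^ 'n"
  assumes a: "\<And>j. real_analytic_on S (\<lambda>t. f t $ j)"
  shows "real_analytic_on S f"
  unfolding real_analytic_on_def
proof
  fix x assume x: "x \<in> S"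
  have "\<exists>r>0. \<exists>c::nat \<Rightarrow> 'a. \<forall>y\<in>S. \<bar>y - x\<bar> < r \<longrightarrow> (\<lambda>k. ((y - x) ^ k) *\<^sub>R c k) sums f y $ j" for j
    using a[of j] x unfolding real_analytic_on_def by (rule bspec)
  then have "\<exists>rc. fst rc > 0 \<and> (\<forall>y\<in>S. \<bar>y - x\<bar> < fst rc \<longrightarrow> (\<lambda>k. ((y - x) ^ k) *\<^sub>R snd rc k) sums f y $ j)" for j
    by (metis fst_conv snd_conv)
  then obtain RC where RC0: "\<And>j. fst (RC j) > 0 \<and> (\<forall>y\<in>S. \<bar>y - x\<bar> < fst (RC j) \<longrightarrow> (\<lambda>k. ((y - x) ^ k) *\<^sub>R snd (RC j) k) sums f y $ j)"
    by metis
  define R where "R j = fst (RC j)" for j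
  define C where "C j = snd (RC j)" for j
  have RC: "\<And>j. R j > 0"
    "\<And>j. \<forall>y\<in>S. \<bar>y - x\<bar> < R j \<longrightarrow> (\<lambda>k. ((y - x) ^ k) *\<^sub>R C j k) sums f y $ j"
    using RC0 unfolding R_def C_def by auto
  define r where "r = Min (range R)"
  have r: "r > 0" unfolding r_def using RC(1) by (subst Min_gr_iff) simp_all
  have rle: "r \<le> R j" for j unfolding r_def by (rule Min_le) auto
  have "\<forall>y\<in>S. \<bar>y - x\<bar> < r \<longrightarrow> (\<lambda>k. ((y - x) ^ k) *\<^sub>R (\<chi> j. C j k)) sums f y"
  proof (intro ballI impI)
    fix y assume y: "y \<in> S" "\<bar>y - x\<bar> < r"
    show "(\<lambda>k. ((y - x) ^ k) *\<^sub>R (\<chi> j. C j k)) sums f y"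
      unfolding sums_def
    proof (rule vec_tendstoI)
      fix j
      have "\<bar>y - x\<bar> < R j" using y rle[of j] by linarith
      then have "(\<lambda>k. ((y - x) ^ k) *\<^sub>R C j k) sums f y $ j" using RC(2) y by blast
      then show "((\<lambda>n. (\<Sum>k<n. ((y - x) ^ k) *\<^sub>R (\<chi> j. C j k)) $ j) \<longlongrightarrow> f y $ j) sequentially"
        unfolding sums_def by simp
    qed
  qed
  then show "\<exists>r>0. \<exists>c::nat \<Rightarrow> 'a^'n. \<forall>y\<in>S. \<bar>y - x\<bar> < r \<longrightarrow> (\<lambda>k. ((y - x) ^ k) *\<^sub>R c k) sums f y"
    using r by (intro exI[of _ r] conjI exI[of _ "\<lambda>k. \<chi> j. C j k"])
qed

lemma analytic_comp:
  fixes f :: "real \<Rightarrow> 'a::real_normed_vector ^ 'n"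
  assumes a: "real_analytic_on S f"
  shows "real_analytic_on S (\<lambda>t. f t $ j)"
  unfolding real_analytic_on_def
proof
  fix x assume "x \<in> S"
  with a have "\<exists>r>0. \<exists>c::nat \<Rightarrow> 'a^'n. \<forall>y\<in>S. \<bar>y - x\<bar> < r \<longrightarrow> (\<lambda>k. ((y - x) ^ k) *\<^sub>R c k) sums f y"
    unfolding real_analytic_on_def by (rule bspec)
  then obtain r c where r: "r > 0" "\<forall>y\<in>S. \<bar>y - x\<bar> < r \<longrightarrow> (\<lambda>k. ((y - x) ^ k) *\<^sub>R c k) sums f y"
    by (elim exE conjE) (rule that)
  have "\<forall>y\<in>S. \<bar>y - x\<bar> < r \<longrightarrow> (\<lambda>k. ((y - x) ^ k) *\<^sub>R (c k $ j)) sums (f y $ j)"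
  proof (intro ballI impI)
    fix y assume "y \<in> S" "\<bar>y - x\<bar> < r"
    then have "(\<lambda>k. ((y - x) ^ k) *\<^sub>R c k) sums f y" using r(2) by simp
    from sums_vec_nth[OF this, of j]
    show "(\<lambda>k. ((y - x) ^ k) *\<^sub>R (c k $ j)) sums (f y $ j)" by simp
  qed
  then show "\<exists>r>0. \<exists>c::nat \<Rightarrow> 'a. \<forall>y\<in>S. \<bar>y - x\<bar> < r \<longrightarrow> (\<lambda>k. ((y - x) ^ k) *\<^sub>R c k) sums f y $ j"
    using r(1) by (intro exI[of _ r] conjI exI[of _ "\<lambda>k. c k $ j"])
qed

lemma vext_imp_analytic: "vext S f \<Longrightarrow> real_analytic_on S f"
  unfolding vext_def by (intro analytic_vec cext_imp_analytic) (erule spec)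

lemma analytic_imp_vext: "real_analytic_on {0..<e} (f :: real \<Rightarrow> real^'n) \<Longrightarrow> vext {0..<e} f"
  unfolding vext_def by (intro allI analytic_imp_cext analytic_comp)

lemma vext_mono: "T \<subseteq> S \<Longrightarrow> vext S f \<Longrightarrow> vext T f"
  unfolding vext_def using cext_mono by simp

lemma vext_const: "vext S (\<lambda>t. c)"
  unfolding vext_def using cext_const by simp

lemma vext_diff: "vext S f \<Longrightarrow> vext S g \<Longrightarrow> vext S (\<lambda>t. f t - g t)"
  unfolding vext_def using cext_diff by simp

lemma vext_scale: "cext S c \<Longrightarrow> vext S f \<Longrightarrow> vext S (\<lambda>t. c t *\<^sub>R f t)"
  unfolding vext_def using cext_mult by simp

lemma vext_sum:
  assumes "finite I" "\<And>i. i \<in> I \<Longrightarrow> vext S (f i)"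
  shows "vext S (\<lambda>t. \<Sum>i\<in>I. f i t)"
  using assms unfolding vext_def by (simp add: cext_sum)

lemma cext_inner:
  assumes "vext S f" "vext S g"
  shows "cext S (\<lambda>t. inner (f t) (g t))"
  using assms unfolding vext_def inner_vec_def inner_real_def
  by (intro cext_sum cext_mult) auto

lemma GS:
  fixes f :: "nat \<Rightarrow> real \<Rightarrow> real^'d"
  assumes "e0 > 0" "\<forall>k<N. vext {0..<e0} (f k)" "inj_on (\<lambda>k. f k 0) {..<N}"
    "independent ((\<lambda>k. f k 0) ` {..<N})"
  shows "\<exists>e>0. e \<le> e0 \<and> (\<exists>u. (\<forall>k<N. vext {0..<e} (u k)) \<and>
    (\<forall>t\<in>{0..<e}. (\<forall>i<N. \<forall>j<N. inner (u i t) (u j t) = (if i = j then 1 else 0)) \<and>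
       (\<forall>k<N. f k t \<in> span ((\<lambda>i. u i t) ` {..k}) \<and> u k t \<in> span ((\<lambda>i. f i t) ` {..k}))))"
  using assms
proof (induction N)
  case 0
  then show ?case by (intro exI[of _ e0] conjI exI[of _ "\<lambda>_ _. 0"]) simp_all
next
  case (Suc N)
  have "inj_on (\<lambda>k. f k 0) {..<N}"
    using Suc.prems(3) by (rule inj_on_subset) auto
  moreover have "independent ((\<lambda>k. f k 0) ` {..<N})"
    using Suc.prems(4) by (rule independent_mono) auto
  moreover have "\<forall>k<N. vext {0..<e0} (f k)" using Suc.prems(2) by simp
  ultimately have "\<exists>e>0. e \<le> e0 \<and> (\<exists>u. (\<forall>k<N. vext {0..<e} (u k)) \<and>
    (\<forall>t\<in>{0..<e}. (\<forall>i<N. \<forall>j<N. inner (u i t) (u j t) = (if i = j then 1 else 0)) \<and>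
       (\<forall>k<N. f k t \<in> span ((\<lambda>i. u i t) ` {..k}) \<and> u k t \<in> span ((\<lambda>i. f i t) ` {..k}))))"
    using Suc.IH Suc.prems(1) by simp
  then obtain e u where e: "e > 0" "e \<le> e0" and uv: "\<forall>k<N. vext {0..<e} (u k)"
    and U: "\<forall>t\<in>{0..<e}. (\<forall>i<N. \<forall>j<N. inner (u i t) (u j t) = (if i = j then 1 else 0)) \<and>
       (\<forall>k<N. f k t \<in> span ((\<lambda>i. u i t) ` {..k}) \<and> u k t \<in> span ((\<lambda>i. f i t) ` {..k}))"
    by (elim exE conjE) (rule that)
  have orth: "inner (u i t) (u j t) = (if i = j then 1 else 0)" if "t \<in> {0..<e}" "i < N" "j < N" for t i j
    using U that by simp
  have sp1: "f k t \<in> span ((\<lambda>i. u i t) ` {..k})" if "t \<in> {0..<e}" "k < N" for t k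
    using U that by simp
  have sp2: "u k t \<in> span ((\<lambda>i. f i t) ` {..k})" if "t \<in> {0..<e}" "k < N" for t k
    using U that by simp
  have fv: "vext {0..<e} (f k)" if "k < Suc N" for k
    using vext_mono[of "{0..<e}" "{0..<e0}" "f k"] Suc.prems(2) that e by auto
  define w where "w t = f N t - (\<Sum>i<N. inner (f N t) (u i t) *\<^sub>R u i t)" for t
  have vw: "vext {0..<e} w"
    unfolding w_def
    by (intro vext_diff fv vext_sum vext_scale cext_inner) (use uv in auto)
  have wu: "inner (w t) (u j t) = 0" if "t \<in> {0..<e}" "j < N" for t j
  proof -
    have "(\<Sum>i<N. inner (f N t) (u i t) * inner (u i t) (u j t))
        = (\<Sum>i<N. if i = j then inner (f N t) (u j t) else 0)"
      using orth[OF that(1) _ that(2)] by (intro sum.cong) auto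
    also have "\<dots> = inner (f N t) (u j t)" using that(2) by simp
    finally show ?thesis unfolding w_def by (simp add: inner_diff_left inner_sum_left)
  qed
  have span_u_f: "span ((\<lambda>i. u i t) ` {..<N}) \<subseteq> span ((\<lambda>i. f i t) ` {..<N})"
    if "t \<in> {0..<e}" for t
  proof (rule span_minimal)
    show "(\<lambda>i. u i t) ` {..<N} \<subseteq> span ((\<lambda>i. f i t) ` {..<N})"
    proof
      fix v assume "v \<in> (\<lambda>i. u i t) ` {..<N}"
      then obtain i where i: "i < N" "v = u i t" by auto
      have "span ((\<lambda>i. f i t) ` {..i}) \<subseteq> span ((\<lambda>i. f i t) ` {..<N})"
        using i by (intro span_mono image_mono) auto
      then show "v \<in> span ((\<lambda>i. f i t) ` {..<N})" using sp2[OF that i(1)] i by auto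
    qed
  qed simp
  have w0: "w 0 \<noteq> 0"
  proof
    assume "w 0 = 0"
    then have fN: "f N 0 = (\<Sum>i<N. inner (f N 0) (u i 0) *\<^sub>R u i 0)" unfolding w_def by simp
    have "(\<Sum>i<N. inner (f N 0) (u i 0) *\<^sub>R u i 0) \<in> span ((\<lambda>i. u i 0) ` {..<N})"
      by (intro span_sum span_mul span_base) auto
    then have "f N 0 \<in> span ((\<lambda>i. u i 0) ` {..<N})" by (subst fN)
    then have inspan: "f N 0 \<in> span ((\<lambda>k. f k 0) ` {..<N})" using span_u_f[of 0] e by auto
    have "(\<lambda>k. f k 0) ` {..<Suc N} - {f N 0} = (\<lambda>k. f k 0) ` {..<N}"
      using Suc.prems(3) by (auto simp: inj_on_def less_Suc_eq)
    then have "dependent ((\<lambda>k. f k 0) ` {..<Suc N})"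
      unfolding dependent_def using inspan by (intro bexI[of _ "f N 0"]) auto
    then show False using Suc.prems(4) by simp
  qed
  define h where "h t = inner (w t) (w t)" for t
  have hc: "cext {0..<e} h" unfolding h_def by (intro cext_inner vw)
  have "h 0 > 0" unfolding h_def using w0 by simp
  then obtain \<delta> where d: "\<delta> > 0" "\<And>y. y \<in> {0..<e} \<Longrightarrow> \<bar>y - 0\<bar> < \<delta> \<Longrightarrow> h y > 0"
    using cext_pos_nbhd[OF hc, of 0] e by auto
  define e' where "e' = min e \<delta>"
  have e': "e' > 0" "e' \<le> e0" "{0..<e'} \<subseteq> {0..<e}" using e d by (auto simp: e'_def)
  have hpos: "h t > 0" if "t \<in> {0..<e'}" for t
    using d(2)[of t] that by (auto simp: e'_def)
  define u' where "u' = u(N := (\<lambda>t. (1 / sqrt (h t)) *\<^sub>R w t))"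
  have "\<forall>k<Suc N. vext {0..<e'} (u' k)"
  proof (intro allI impI)
    fix k assume k: "k < Suc N"
    show "vext {0..<e'} (u' k)"
    proof (cases "k = N")
      case True
      have "cext {0..<e'} (\<lambda>t. 1 / sqrt (h t))"
        using hpos by (intro cext_inv_sqrt cext_mono[OF e'(3) hc])
      then show ?thesis unfolding u'_def using True
        by (simp add: vext_scale vext_mono[OF e'(3) vw])
    next
      case False
      then have "k < N" using k by simp
      then have "vext {0..<e} (u k)" using uv by simp
      then have "vext {0..<e'} (u k)" by (rule vext_mono[OF e'(3)])
      then show ?thesis using False by (simp add: u'_def)
    qed
  qed
  moreover have "\<forall>t\<in>{0..<e'}. (\<forall>i<Suc N. \<forall>j<Suc N. inner (u' i t) (u' j t) = (if i = j then 1 else 0)) \<and>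
       (\<forall>k<Suc N. f k t \<in> span ((\<lambda>i. u' i t) ` {..k}) \<and> u' k t \<in> span ((\<lambda>i. f i t) ` {..k}))"
  proof
    fix t assume t': "t \<in> {0..<e'}"
    then have t: "t \<in> {0..<e}" using e'(3) by auto
    have ht: "h t > 0" using hpos t' by simp
    have uN: "u' N t = (1 / sqrt (h t)) *\<^sub>R w t" unfolding u'_def by simp
    have uo: "u' i t = u i t" if "i < N" for i unfolding u'_def using that by simp
    have NN: "inner (u' N t) (u' N t) = 1"
      unfolding uN using ht by (simp add: h_def[symmetric] power2_eq_square[symmetric])
    have Nj: "inner (u' N t) (u' j t) = 0" if "j < N" for j
      unfolding uN uo[OF that] using wu[OF t that] by simp
    have "\<forall>i<Suc N. \<forall>j<Suc N. inner (u' i t) (u' j t) = (if i = j then 1 else 0)"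
    proof (intro allI impI)
      fix i j assume ij: "i < Suc N" "j < Suc N"
      show "inner (u' i t) (u' j t) = (if i = j then 1 else 0)"
      proof (cases "i = N")
        case True
        then show ?thesis using NN Nj ij by (cases "j = N") auto
      next
        case False
        then have i: "i < N" using ij by simp
        show ?thesis
        proof (cases "j = N")
          case True
          then show ?thesis using Nj[OF i] i by (simp add: inner_commute)
        next
          case False
          then show ?thesis using orth[OF t i] ij uo[OF i] uo[of j] by simp
        qed
      qed
    qed
    moreover have "\<forall>k<Suc N. f k t \<in> span ((\<lambda>i. u' i t) ` {..k}) \<and> u' k t \<in> span ((\<lambda>i. f i t) ` {..k})"
    proof (intro allI impI)
      fix k assume k: "k < Suc N"
      show "f k t \<in> span ((\<lambda>i. u' i t) ` {..k}) \<and> u' k t \<in> span ((\<lambda>i. f i t) ` {..k})"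
      proof (cases "k = N")
        case False
        then have kN: "k < N" using k by simp
        have "(\<lambda>i. u' i t) ` {..k} = (\<lambda>i. u i t) ` {..k}"
          using kN uo by (intro image_cong) auto
        then show ?thesis using sp1[OF t kN] sp2[OF t kN] uo[OF kN] by simp
      next
        case True
        have wsp: "w t = sqrt (h t) *\<^sub>R u' N t" unfolding uN using ht by simp
        have "f N t = sqrt (h t) *\<^sub>R u' N t + (\<Sum>i<N. inner (f N t) (u i t) *\<^sub>R u' i t)"
          using uo unfolding wsp[symmetric] w_def by simp
        also have "\<dots> \<in> span ((\<lambda>i. u' i t) ` {..N})"
          by (intro span_add span_sum span_mul span_base) auto
        finally have A: "f N t \<in> span ((\<lambda>i. u' i t) ` {..N})" .
        have B1: "u i t \<in> span ((\<lambda>i. f i t) ` {..N})" if "i < N" for i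
        proof -
          have "span ((\<lambda>i. f i t) ` {..i}) \<subseteq> span ((\<lambda>i. f i t) ` {..N})"
            using that by (intro span_mono image_mono) auto
          then show ?thesis using sp2[OF t that] by auto
        qed
        have "u' N t = (1 / sqrt (h t)) *\<^sub>R (f N t - (\<Sum>i<N. inner (f N t) (u i t) *\<^sub>R u i t))"
          unfolding uN w_def ..
        also have "\<dots> \<in> span ((\<lambda>i. f i t) ` {..N})"
          by (intro span_mul span_diff span_sum span_base B1) auto
        finally show ?thesis using A True by simp
      qed
    qed
    ultimately show "(\<forall>i<Suc N. \<forall>j<Suc N. inner (u' i t) (u' j t) = (if i = j then 1 else 0)) \<and>
       (\<forall>k<Suc N. f k t \<in> span ((\<lambda>i. u' i t) ` {..k}) \<and> u' k t \<in> span ((\<lambda>i. f i t) ` {..k}))"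
      by (rule conjI)
  qed
  ultimately show ?case using e' by (intro exI[of _ e'] conjI exI[of _ u']) simp_all
qed

lemma span_axis:
  fixes x :: "real^'d"
  assumes "\<And>j. j \<notin> T \<Longrightarrow> x $ j = 0"
  shows "x \<in> span ((\<lambda>j. axis j 1) ` T)"
proof -
  have "x = (\<Sum>j\<in>UNIV. x $ j *\<^sub>R axis j 1)"
    using basis_expansion[of x] by (simp add: scalar_mult_eq_scaleR)
  also have "\<dots> = (\<Sum>j\<in>T. x $ j *\<^sub>R axis j 1)"
    using assms by (intro sum.mono_neutral_right) auto
  also have "\<dots> \<in> span ((\<lambda>j. axis j 1) ` T)"
    by (intro span_sum span_mul span_base imageI)
  finally show ?thesis .
qed

definition idx :: "'d::{finite,linorder} \<Rightarrow> nat" where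
  "idx j = card {j'. j' < j}"

lemma idx_less: "idx (j::'d::{finite,linorder}) < CARD('d)"
  unfolding idx_def by (rule psubset_card_mono) auto

lemma idx_inj: "inj (idx :: 'd::{finite,linorder} \<Rightarrow> nat)"
proof (rule injI)
  fix a b :: 'd assume eq: "idx a = idx b"
  show "a = b"
  proof (rule ccontr)
    assume "a \<noteq> b"
    then have "a < b \<or> b < a" by auto
    moreover have "idx a < idx b" if "a < b" for a b :: 'd
      unfolding idx_def using that by (intro psubset_card_mono) auto
    ultimately show False using eq by (metis less_irrefl)
  qed
qed

lemma first_coords_idx: "j \<in> first_coords k \<longleftrightarrow> idx j < k"
  unfolding first_coords_def idx_def by simp


theorem lemmaA5:
  fixes n l :: nat and p :: "nat \<Rightarrow> (real, 'd::{finite,linorder}) vec"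
    and P :: "real \<Rightarrow> nat \<Rightarrow> (real, 'd) vec" and \<epsilon>0 :: real
  assumes "nondegenerate n l p"
    and "\<epsilon>0 > 0"
    and "\<forall>i\<in>{1..n}. real_analytic_on {0..<\<epsilon>0} (\<lambda>t. P t i)"
    and "\<forall>i\<in>{1..n}. P 0 i = p i"
  shows "\<exists>\<epsilon>>0. \<exists>(A :: real \<Rightarrow> ((real, 'd) vec, 'd) vec) (b :: real \<Rightarrow> (real, 'd) vec).
           real_analytic_on {0..<\<epsilon>} A \<and> real_analytic_on {0..<\<epsilon>} b \<and>
           (\<forall>t\<in>{0..<\<epsilon>}. orthogonal_matrix (A t) \<and>
              pinned l (\<lambda>i. A t *v P t i + b t))"
proof -
  have aff: "aff_dim (p ` {1..n}) = int l" and injp: "inj_on p {1..l+1}"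
    and indp: "\<not> affine_dependent (p ` {1..l+1})"
    using assms(1) unfolding nondegenerate_def by auto
  have ln: "l + 1 \<le> n"
  proof (rule ccontr)
    assume "\<not> l + 1 \<le> n"
    then have "card (p ` {1..n}) \<le> l" using card_image_le[of "{1..n}" p] by simp
    moreover have "aff_dim (p ` {1..n}) \<le> int (card (p ` {1..n})) - 1"
      using aff_dim_le_card[of "p ` {1..n}"] by simp
    ultimately show False using aff by simp
  qed
  have Pv: "vext {0..<\<epsilon>0} (\<lambda>t. P t i)" if "i \<in> {1..n}" for i
    using assms(3) that by (intro analytic_imp_vext) simp
  define v where "v k t = P t (k+2) - P t 1" for k t
  have vv: "vext {0..<\<epsilon>0} (v k)" if "k < l" for k
  proof -
    have "vext {0..<\<epsilon>0} (\<lambda>t. P t (k+2) - P t 1)"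
      using Pv[of "k+2"] Pv[of 1] that ln by (intro vext_diff) auto
    then show ?thesis unfolding v_def[abs_def] by simp
  qed
  have v0: "v k 0 = p (k+2) - p 1" if "k < l" for k using assms(4) that ln by (simp add: v_def)
  define V0 where "V0 = (\<lambda>k. v k 0) ` {..<l}"
  have shift: "(\<lambda>k. k + 2) ` {..<l} = {2..l+1}"
    using image_add_atLeastLessThan'[of 2 0 l] by (auto simp: lessThan_atLeast0)
  have V0eq: "V0 = (\<lambda>x. - p 1 + x) ` (p ` {2..l+1})"
  proof -
    have "V0 = (\<lambda>k. p (k+2) - p 1) ` {..<l}" unfolding V0_def using v0 by (intro image_cong) auto
    also have "\<dots> = (\<lambda>i. p i - p 1) ` ((\<lambda>k. k + 2) ` {..<l})" by (simp add: image_image)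
    also have "\<dots> = (\<lambda>x. - p 1 + x) ` (p ` {2..l+1})" unfolding shift by (simp add: image_image)
    finally show ?thesis .
  qed
  have p1: "p 1 \<notin> p ` {2..l+1}"
  proof
    assume "p 1 \<in> p ` {2..l+1}"
    then obtain i where i: "i \<in> {2..l+1}" "p 1 = p i" by auto
    then have "1 = i" using injp unfolding inj_on_def by (metis atLeastAtMost_iff le_add2 le_numeral_extra(4) one_le_numeral order_trans)
    then show False using i by simp
  qed
  have "{1..l+1} = insert 1 {2..l+1}" by auto
  then have "p ` {1..l+1} = insert (p 1) (p ` {2..l+1})" by simp
  then have indV0: "independent V0"
    using indp affine_dependent_iff_dependent[OF p1] V0eq by simp
  have injV: "inj_on (\<lambda>k. v k 0) {..<l}"
  proof (rule inj_onI)
    fix a b assume ab: "a \<in> {..<l}" "b \<in> {..<l}" "v a 0 = v b 0"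
    then have "p (a+2) = p (b+2)" using v0 by simp
    moreover have "a + 2 \<in> {1..l+1}" "b + 2 \<in> {1..l+1}" using ab by auto
    ultimately have "a + 2 = b + 2" using injp unfolding inj_on_def by blast
    then show "a = b" by simp
  qed
  have cardV0: "card V0 = l" unfolding V0_def using card_image[OF injV] by simp
  define B where "B = extend_basis V0"
  have V0B: "V0 \<subseteq> B" and indB: "independent B" and spB: "span B = UNIV"
    unfolding B_def using extend_basis_superset[OF indV0] independent_extend_basis[OF indV0]
      span_extend_basis[OF indV0] by auto
  have cardB: "card B = CARD('d)"
  proof -
    have "dim (span B) = card B" by (rule dim_span_eq_card_independent[OF indB])
    then show ?thesis using spB by simp
  qed
  have finB: "finite B" using cardB by (intro card_ge_0_finite) simp
  have finV0: "finite V0" using finB V0B by (rule finite_subset[rotated])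
  have lm: "l \<le> CARD('d)" using card_mono[OF finB V0B] cardV0 cardB by simp
  define C where "C = B - V0"
  have finC: "finite C" unfolding C_def using finB by simp
  have cardC: "card C = CARD('d) - l" unfolding C_def using card_Diff_subset[OF finV0 V0B] cardB cardV0 by simp
  obtain g where g: "bij_betw g {0..<card C} C" using ex_bij_betw_nat_finite[OF finC] by (elim exE)
  define F where "F k t = (if k < l then v k t else g (k - l))" for k t
  have Fv: "\<forall>k<CARD('d). vext {0..<\<epsilon>0} (F k)"
  proof (intro allI impI)
    fix k assume "k < CARD('d)"
    show "vext {0..<\<epsilon>0} (F k)"
    proof (cases "k < l")
      case True
      have "F k = v k" using True by (intro ext) (simp add: F_def)
      then show ?thesis using vv[OF True] by simp
    next
      case False
      have "F k = (\<lambda>t. g (k - l))" using False by (intro ext) (simp add: F_def)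
      then show ?thesis using vext_const by simp
    qed
  qed
  have imF: "(\<lambda>k. F k 0) ` {..<CARD('d)} = B"
  proof -
    have "{..<CARD('d)} = {..<l} \<union> {l..<CARD('d)}" using lm by auto
    then have "(\<lambda>k. F k 0) ` {..<CARD('d)} = (\<lambda>k. F k 0) ` {..<l} \<union> (\<lambda>k. F k 0) ` {l..<CARD('d)}"
      by (simp only: image_Un)
    also have "(\<lambda>k. F k 0) ` {..<l} = V0" unfolding V0_def by (intro image_cong) (auto simp: F_def)
    also have "(\<lambda>k. F k 0) ` {l..<CARD('d)} = g ` ((\<lambda>k. k - l) ` {l..<CARD('d)})"
      by (auto simp: F_def image_image intro!: image_cong)
    also have "(\<lambda>k. k - l) ` {l..<CARD('d)} = {0..<card C}"
      using cardC lm by (simp add: image_minus_const_atLeastLessThan_nat)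
    also have "g ` {0..<card C} = C" using g by (simp add: bij_betw_def)
    also have "V0 \<union> C = B" unfolding C_def using V0B by auto
    finally show ?thesis .
  qed
  have injF: "inj_on (\<lambda>k. F k 0) {..<CARD('d)}"
    by (rule eq_card_imp_inj_on) (simp_all add: imF cardB)
  have indF: "independent ((\<lambda>k. F k 0) ` {..<CARD('d)})" using imF indB by simp
  from GS[OF assms(2) Fv injF indF]
  obtain e u where e: "e > 0" "e \<le> \<epsilon>0" and uv: "\<forall>k<CARD('d). vext {0..<e} (u k)"
    and U: "\<forall>t\<in>{0..<e}. (\<forall>i<CARD('d). \<forall>j<CARD('d). inner (u i t) (u j t) = (if i = j then 1 else 0)) \<and>
       (\<forall>k<CARD('d). F k t \<in> span ((\<lambda>i. u i t) ` {..k}) \<and> u k t \<in> span ((\<lambda>i. F i t) ` {..k}))"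
    by (elim exE conjE) (rule that)
  have orth: "inner (u i t) (u j t) = (if i = j then 1 else 0)" if "t \<in> {0..<e}" "i < CARD('d)" "j < CARD('d)" for t i j
    using U that by simp
  have sp1: "F k t \<in> span ((\<lambda>i. u i t) ` {..k})" if "t \<in> {0..<e}" "k < CARD('d)" for t k
    using U that by simp
  define A where "A t = (\<chi> (j::'d). u (idx j) t)" for t
  define b where "b t = (\<chi> (j::'d). - inner (u (idx j) t) (P t 1))" for t
  have Pv1: "vext {0..<e} (\<lambda>t. P t 1)"
    using vext_mono[of "{0..<e}" "{0..<\<epsilon>0}" "\<lambda>t. P t 1"] Pv[of 1] ln e by auto
  have uvj: "vext {0..<e} (u (idx j))" for j :: 'd using uv idx_less[of j] by simp
  have anA: "real_analytic_on {0..<e} A"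
  proof (rule analytic_vec)
    fix j :: 'd
    have "(\<lambda>t. A t $ j) = u (idx j)" by (intro ext) (simp add: A_def)
    then show "real_analytic_on {0..<e} (\<lambda>t. A t $ j)" using vext_imp_analytic[OF uvj[of j]] by simp
  qed
  have anb: "real_analytic_on {0..<e} b"
  proof (rule vext_imp_analytic)
    show "vext {0..<e} b" unfolding vext_def
    proof
      fix j :: 'd
      have "cext {0..<e} (\<lambda>t. - inner (u (idx j) t) (P t 1))"
        by (intro cext_uminus cext_inner uvj Pv1)
      then show "cext {0..<e} (\<lambda>t. b t $ j)" by (simp add: b_def)
    qed
  qed
  have q: "(A t *v P t i + b t) $ j = inner (u (idx j) t) (P t i - P t 1)" for t i j
    by (simp add: matrix_mult_dot A_def b_def inner_diff_right)
  have main: "orthogonal_matrix (A t) \<and> pinned l (\<lambda>i. A t *v P t i + b t)" if t: "t \<in> {0..<e}" for t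
  proof
    have "A t ** transpose (A t) = mat 1"
    proof -
      have ik: "inner (u (idx i) t) (u (idx k) t) = (if i = k then 1 else 0)" for i k :: 'd
      proof -
        have o: "inner (u (idx i) t) (u (idx k) t) = (if idx i = idx k then 1 else 0)"
          using orth[OF t idx_less idx_less] .
        have "idx i = idx k \<longleftrightarrow> i = k" using idx_inj by (auto dest: injD)
        then show ?thesis using o by simp
      qed
      show ?thesis unfolding matrix_mult_transpose_dot_row
        by (simp add: vec_eq_iff mat_def row_def A_def vec_lambda_eta ik)
    qed
    then show "orthogonal_matrix (A t)"
      unfolding orthogonal_matrix_def using matrix_left_right_inverse by blast
    show "pinned l (\<lambda>i. A t *v P t i + b t)"
      unfolding pinned_def
    proof
      show "A t *v P t 1 + b t = 0" unfolding vec_eq_iff using q[of t 1] by simp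
      show "\<forall>i. 2 \<le> i \<and> i \<le> l + 1 \<longrightarrow> A t *v P t i + b t \<in> span ((\<lambda>j. axis j 1) ` first_coords (i - 1))"
      proof (intro allI impI)
        fix i assume i: "2 \<le> i \<and> i \<le> l + 1"
        define k where "k = i - 2"
        have k: "k < l" "k < CARD('d)" "i = k + 2" using i lm by (auto simp: k_def)
        have Fk: "F k t = P t i - P t 1" using k by (simp add: F_def v_def)
        show "A t *v P t i + b t \<in> span ((\<lambda>j. axis j 1) ` first_coords (i - 1))"
        proof (rule span_axis)
          fix j :: 'd assume j: "j \<notin> first_coords (i - 1)"
          then have ij: "k < idx j" using k by (simp add: first_coords_idx)
          have "orthogonal (u (idx j) t) (F k t)"
          proof (rule orthogonal_to_span[OF sp1[OF t k(2)]])
            fix y assume "y \<in> (\<lambda>i. u i t) ` {..k}"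
            then obtain i' where i': "i' \<le> k" "y = u i' t" by auto
            have "inner (u (idx j) t) (u i' t) = 0"
            proof -
              have "i' < CARD('d)" using i' k by simp
              from orth[OF t idx_less[of j] this] have "inner (u (idx j) t) (u i' t) = (if idx j = i' then 1 else 0)" .
              moreover have "idx j \<noteq> i'" using i' ij by simp
              ultimately show ?thesis by simp
            qed
            then show "orthogonal (u (idx j) t) y" using i' by (simp add: orthogonal_def)
          qed
          then show "(A t *v P t i + b t) $ j = 0" using q[of t i j] by (simp add: Fk orthogonal_def)
        qed
      qed
    qed
  qed
  show ?thesis
    using e(1) anA anb main by (intro exI[of _ e] conjI exI[of _ A] exI[of _ b]) auto
qed

end
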